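(* Let $\mathbf{H}\in\mathbb{R}^{n\times m}$ and $\mathbf{v}\in\mathbb{R}^n$ be arbitrary and let $\mathbf{y}=\mathbf{H}\mathbf{e}+\mathbf{v}$. If $\tau>4\|\mathbf{v}\|^2$, then every optimal point $\mathbf{X}^\star$ of the SDR problem $\min\mathrm{Tr}(\mathbf{L}\mathbf{X})$ s.t. $\mathrm{diag}(\mathbf{X})=\mathbf{e}$, $\mathbf{X}\succeq\mathbf{0}$ yields $\hat{\mathbf{s}}_{\mathrm{SDR}}=\mathbf{e}$, i.e. $\mathrm{sgn}([\mathbf{X}^\star]_{i,m+1})=1$ for all $i=1,\dots,m$.
   Context: $\mathbf{e}$ is the all-ones vector (of the appropriate dimension). $\mathbf{L}=\begin{bmatrix}\mathbf{H}^T\mathbf{H}&-\mathbf{H}^T\mathbf{y}\\-\mathbf{y}^T\mathbf{H}&\mathbf{y}^T\mathbf{y}\end{bmatrix}$. $\mathcal{X}=\{\mathbf{X}\in\mathbb{S}^{m+1}:\mathrm{diag}(\mathbf{X})=\mathbf{e},\ \mathbf{X}\succeq\mathbf{0}\}$, where $\mathbb{S}^{k}$ is the set of real symmetric $k\times k$ matrices. $\mathbf{M}=[\mathbf{I}_m\ \ -\mathbf{e}]\in\mathbb{R}^{m\times(m+1)}$, $\mathcal{H}=\{\mathbf{X}\in\mathbb{S}^{m+1}:\mathrm{Tr}(\mathbf{M}\mathbf{X}\mathbf{M}^T)=1\}$, $\mathbf{L}_0=\mathbf{M}^T\mathbf{H}^T\mathbf{H}\mathbf{M}$, and $\tau=\min_{\mathbf{X}\in\mathcal{X}\cap\mathcal{H}}\mathrm{Tr}(\mathbf{L}_0\mathbf{X})$.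 The SDR estimate from an optimal point $\mathbf{X}^\star$ is $[\hat{\mathbf{s}}_{\mathrm{SDR}}]_i=\mathrm{sgn}([\mathbf{X}^\star]_{i,m+1})$ with $\mathrm{sgn}(x)=1$ for $x>0$, $-1$ for $x\le0$. *)

theory Defs
  imports Complex_Main
begin

text \<open>Matrices are represented as functions nat => nat => real with explicit
  dimension bounds; indices are 0-based, so the (m+1)-th row/column of an
  (m+1) x (m+1) matrix has index m.\<close>

definition sgnp :: "real \<Rightarrow> real" where
  "sgnp x = (if x > 0 then 1 else -1)"

definition sqnorm :: "nat \<Rightarrow> (nat \<Rightarrow> real) \<Rightarrow> real" where
  "sqnorm n v = (\<Sum>i<n. (v i)\<^sup>2)"

definition yvec :: "nat \<Rightarrow> (nat \<Rightarrow> nat \<Rightarrow> real) \<Rightarrow> (nat \<Rightarrow> real) \<Rightarrow> nat \<Rightarrow> real" where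
  "yvec m H v = (\<lambda>k. (\<Sum>j<m. H k j) + v k)"

definition Lmat :: "nat \<Rightarrow> nat \<Rightarrow> (nat \<Rightarrow> nat \<Rightarrow> real) \<Rightarrow> (nat \<Rightarrow> real) \<Rightarrow> nat \<Rightarrow> nat \<Rightarrow> real" where
  "Lmat n m H y = (\<lambda>i j.
     if i < m \<and> j < m then (\<Sum>k<n. H k i * H k j)
     else if i < m \<and> j = m then - (\<Sum>k<n. H k i * y k)
     else if i = m \<and> j < m then - (\<Sum>k<n. y k * H k j)
     else if i = m \<and> j = m then (\<Sum>k<n. (y k)\<^sup>2)
     else 0)"

definition trprod :: "nat \<Rightarrow> (nat \<Rightarrow> nat \<Rightarrow> real) \<Rightarrow> (nat \<Rightarrow> nat \<Rightarrow> real) \<Rightarrow> real" where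
  "trprod m A X = (\<Sum>i\<le>m. \<Sum>j\<le>m. A i j * X j i)"

definition sdr_feasible :: "nat \<Rightarrow> (nat \<Rightarrow> nat \<Rightarrow> real) \<Rightarrow> bool" where
  "sdr_feasible m X \<longleftrightarrow>
     (\<forall>i\<le>m. \<forall>j\<le>m. X i j = X j i) \<and>
     (\<forall>i\<le>m. X i i = 1) \<and>
     (\<forall>x::nat \<Rightarrow> real. (\<Sum>i\<le>m. \<Sum>j\<le>m. x i * X i j * x j) \<ge> 0)"

definition Mmat :: "nat \<Rightarrow> nat \<Rightarrow> nat \<Rightarrow> real" where
  "Mmat m = (\<lambda>i j. if j < m then (if i = j then 1 else 0) else -1)"

definition trMXMt :: "nat \<Rightarrow> (nat \<Rightarrow> nat \<Rightarrow> real) \<Rightarrow> real" where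
  "trMXMt m X = (\<Sum>i<m. \<Sum>j\<le>m. \<Sum>k\<le>m. Mmat m i j * X j k * Mmat m i k)"

definition L0mat :: "nat \<Rightarrow> nat \<Rightarrow> (nat \<Rightarrow> nat \<Rightarrow> real) \<Rightarrow> nat \<Rightarrow> nat \<Rightarrow> real" where
  "L0mat n m H = (\<lambda>a b. \<Sum>i<m. \<Sum>i'<m. Mmat m i a * (\<Sum>k<n. H k i * H k i') * Mmat m i' b)"

text \<open>tau = min over \<X> \<inter> \<H> of Tr(L0 X) (the minimum is attained; we take the infimum)\<close>
definition tau :: "nat \<Rightarrow> nat \<Rightarrow> (nat \<Rightarrow> nat \<Rightarrow> real) \<Rightarrow> real" where
  "tau n m H = Inf {trprod m (L0mat n m H) X | X. sdr_feasible m X \<and> trMXMt m X = 1}"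

definition sdr_optimal :: "nat \<Rightarrow> (nat \<Rightarrow> nat \<Rightarrow> real) \<Rightarrow> (nat \<Rightarrow> nat \<Rightarrow> real) \<Rightarrow> bool" where
  "sdr_optimal m L X \<longleftrightarrow> sdr_feasible m X \<and>
     (\<forall>Y. sdr_feasible m Y \<longrightarrow> trprod m L X \<le> trprod m L Y)"

end

theory Submission
  imports Defs
begin

definition qf :: "nat \<Rightarrow> (nat \<Rightarrow> nat \<Rightarrow> real) \<Rightarrow> (nat \<Rightarrow> real) \<Rightarrow> real" where
  "qf m X x = (\<Sum>i\<le>m. \<Sum>j\<le>m. x i * X i j * x j)"

lemma qf_lin: "qf m (\<lambda>i j. a * X i j + b * Y i j) x = a * qf m X x + b * qf m Y x"
  unfolding qf_def by (simp add: algebra_simps sum.distrib sum_distrib_left)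

lemma qf_ones: "qf m (\<lambda>i j. 1) x = (\<Sum>i\<le>m. x i)^2"
  unfolding qf_def by (simp add: power2_eq_square sum_product)

lemma qf_par: "qf m X (\<lambda>j. a j - d j) = (qf m X a + qf m X (\<lambda>j. a j - 2 * d j)) / 2 - qf m X d"
proof -
  have "\<And>i j. (a i - d i) * X i j * (a j - d j) =
     (a i * X i j * a j + (a i - 2 * d i) * X i j * (a j - 2 * d j)) / 2 - d i * X i j * d j"
    by (simp add: algebra_simps)
  then have "qf m X (\<lambda>j. a j - d j) = (\<Sum>i\<le>m. \<Sum>j\<le>m. (a i * X i j * a j) / 2 + ((a i - 2 * d i) * X i j * (a j - 2 * d j)) / 2 - d i * X i j * d j)"
    unfolding qf_def by (simp add: add_divide_distrib)
  also have "\<dots> = (qf m X a) / 2 + qf m X (\<lambda>j. a j - 2 * d j) / 2 - qf m X d"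
    unfolding qf_def by (simp only: sum_subtractf sum.distrib sum_divide_distrib[symmetric])
  finally show ?thesis by simp
qed

lemma qf_delta:
  assumes "a \<le> m"
  shows "qf m X (\<lambda>j. if j = a then c else 0) = c * X a a * c"
proof -
  have e: "\<And>i j. (if i = a then c else 0) * X i j * (if j = a then c else 0) =
     (if i = a then (if j = a then c * X a a * c else 0) else (0::real))" by auto
  have "\<And>i. (\<Sum>j\<le>m. if i = a then if j = a then c * X a a * c else 0 else 0) = (if i = a then c * X a a * c else (0::real))"
    using assms by (simp add: sum.delta)
  then show ?thesis using assms unfolding qf_def e by (simp add: sum.delta)
qed

lemma sdelta: "(b::nat) \<le> m \<Longrightarrow> (\<Sum>j\<le>m. if j = b then c else 0) = (c::real)"
  by (subst sum.delta) auto

lemma bf_delta: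
  fixes X :: "nat \<Rightarrow> nat \<Rightarrow> real"
  assumes "a \<le> m" "b \<le> m"
  shows "(\<Sum>i\<le>m. \<Sum>j\<le>m. (if i = a then 1 else 0) * X i j * (if j = b then 1 else 0)) = (X a b :: real)"
proof -
  have e: "\<And>i j. (if i = a then 1 else 0) * X i j * (if j = b then 1 else 0) =
     (if i = a then (if j = b then X a b else 0) else (0::real))" by auto
  have "\<And>i. (\<Sum>j\<le>m. if i = a then if j = b then X a b else 0 else 0) = (if i = a then X a b else (0::real))"
    using assms by (simp add: sdelta)
  then show ?thesis using assms unfolding e by (simp add: sdelta)
qed

lemma qf_two:
  assumes "a \<le> m" "b \<le> m"
  shows "qf m X (\<lambda>j. (if j = a then 1 else 0) - (if j = b then 1 else 0)) = X a a - X a b - X b a + X b b"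
proof -
  have e: "\<And>i j. ((if i = a then 1 else 0) - (if i = b then 1 else 0)) * X i j * ((if j = a then 1 else 0) - (if j = b then 1 else 0))
     = ((if i = a then 1 else 0) * X i j * (if j = a then 1 else 0) - (if i = a then 1 else 0) * X i j * (if j = b then 1 else 0))
     - ((if i = b then 1 else 0) * X i j * (if j = a then 1 else 0) - (if i = b then 1 else 0) * X i j * (if j = b then 1 else (0::real)))"
    by (simp add: algebra_simps)
  show ?thesis unfolding qf_def e
    by (simp only: sum_subtractf bf_delta assms)
qed

lemma trprod_as:
  assumes sym: "\<forall>i\<le>m. \<forall>j\<le>m. X i j = X j i"
    and A: "\<forall>i\<le>m. \<forall>j\<le>m. A i j = (\<Sum>k<n. r k i * r k j)"
  shows "trprod m A X = (\<Sum>k<n. qf m X (r k))"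
proof -
  have "trprod m A X = (\<Sum>i\<le>m. \<Sum>j\<le>m. \<Sum>k<n. r k i * X i j * r k j)"
    unfolding trprod_def
    by (intro sum.cong refl) (simp add: A sym sum_distrib_left sum_distrib_right mult_ac)
  also have "\<dots> = (\<Sum>k<n. qf m X (r k))"
    unfolding qf_def
    by (simp add: sum.swap[of _ "{..<n}"])
  finally show ?thesis .
qed


definition r0 :: "nat \<Rightarrow> (nat \<Rightarrow> nat \<Rightarrow> real) \<Rightarrow> nat \<Rightarrow> nat \<Rightarrow> real" where
  "r0 m H k j = (if j < m then H k j else - (\<Sum>i<m. H k i))"

definition dv :: "nat \<Rightarrow> (nat \<Rightarrow> real) \<Rightarrow> nat \<Rightarrow> nat \<Rightarrow> real" where
  "dv m v k j = (if j = m then v k else 0)"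

lemma a1: "j < m \<Longrightarrow> (\<Sum>i<m. H k i * Mmat m i j) = (\<Sum>i<m. if i = j then H k i else 0)"
  by (intro sum.cong refl) (simp add: Mmat_def)
lemma a2: "(j::nat) < m \<Longrightarrow> (\<Sum>i<m. if i = j then H k i else (0::real)) = H k j"
  by (simp add: sum.delta)
lemma a3: "(\<Sum>i<m. H k i * Mmat m i m) = - (\<Sum>i<m. H k i)"
  by (simp add: Mmat_def sum_negf)
lemma r0_M: "j \<le> m \<Longrightarrow> r0 m H k j = (\<Sum>i<m. H k i * Mmat m i j)"
  by (cases "j < m") (auto simp: a1 a2 a3 r0_def)

lemma L0_eq: "\<forall>a\<le>m. \<forall>b\<le>m. L0mat n m H a b = (\<Sum>k<n. r0 m H k a * r0 m H k b)"
proof (intro allI impI)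
  fix a b assume ab: "a \<le> m" "b \<le> m"
  have "(\<Sum>k<n. r0 m H k a * r0 m H k b) = (\<Sum>k<n. (\<Sum>i<m. H k i * Mmat m i a) * (\<Sum>i'<m. H k i' * Mmat m i' b))"
    using ab by (simp add: r0_M)
  also have "\<dots> = (\<Sum>k<n. \<Sum>i<m. \<Sum>i'<m. Mmat m i a * (H k i * H k i') * Mmat m i' b)"
    by (simp add: sum_product mult_ac)
  also have "\<dots> = (\<Sum>i<m. \<Sum>k<n. \<Sum>i'<m. Mmat m i a * (H k i * H k i') * Mmat m i' b)"
    by (rule sum.swap)
  also have "\<dots> = (\<Sum>i<m. \<Sum>i'<m. \<Sum>k<n. Mmat m i a * (H k i * H k i') * Mmat m i' b)"
    by (rule sum.cong[OF refl], rule sum.swap)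
  also have "\<dots> = L0mat n m H a b"
    unfolding L0mat_def
    by (intro sum.cong refl) (simp add: sum_distrib_left sum_distrib_right)
  finally show "L0mat n m H a b = (\<Sum>k<n. r0 m H k a * r0 m H k b)" by simp
qed

lemma L_eq: "\<forall>i\<le>m. \<forall>j\<le>m. Lmat n m H (yvec m H v) i j =
   (\<Sum>k<n. (r0 m H k i - dv m v k i) * (r0 m H k j - dv m v k j))"
proof (intro allI impI)
  fix i j assume "i \<le> m" "j \<le> m"
  then consider "i < m" "j < m" | "i < m" "j = m" | "i = m" "j < m" | "i = m" "j = m" by linarith
  then show "Lmat n m H (yvec m H v) i j = (\<Sum>k<n. (r0 m H k i - dv m v k i) * (r0 m H k j - dv m v k j))"
  proof cases
    case 1 then show ?thesis unfolding Lmat_def r0_def dv_def by simp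
  next
    case 2 then show ?thesis unfolding Lmat_def r0_def dv_def yvec_def
      by (simp add: sum_negf[symmetric], intro sum.cong refl, simp add: sum_negf algebra_simps)
  next
    case 3 then show ?thesis unfolding Lmat_def r0_def dv_def yvec_def
      by (simp add: sum_negf[symmetric], intro sum.cong refl, simp add: sum_negf algebra_simps)
  next
    case 4 then show ?thesis unfolding Lmat_def r0_def dv_def yvec_def
      by (simp add: power2_eq_square algebra_simps)
  qed
qed

lemma trM_eq:
  assumes "\<forall>i\<le>m. \<forall>j\<le>m. X i j = X j i"
  shows "trMXMt m X = (\<Sum>i<m. X i i - 2 * X i m + X m m)"
proof -
  have "trMXMt m X = (\<Sum>i<m. qf m X (\<lambda>j. (if j = i then 1 else 0) - (if j = m then 1 else 0)))"
    unfolding trMXMt_def qf_def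
    by (intro sum.cong refl) (auto simp: Mmat_def mult_ac)
  also have "\<dots> = (\<Sum>i<m. X i i - 2 * X i m + X m m)"
    using assms by (intro sum.cong refl) (simp add: qf_two)
  finally show ?thesis .
qed


lemma sum_r0: "(\<Sum>j\<le>m. r0 m H k j) = 0"
proof -
  have "(\<Sum>j\<le>m. r0 m H k j) = (\<Sum>j<m. r0 m H k j) + r0 m H k m"
    by (simp add: lessThan_Suc_atMost[symmetric])
  also have "(\<Sum>j<m. r0 m H k j) = (\<Sum>j<m. H k j)" by (intro sum.cong) (auto simp: r0_def)
  finally show ?thesis by (simp add: r0_def)
qed

lemma sum_r1: "(\<Sum>j\<le>m. r0 m H k j - dv m v k j) = - v k"
proof -
  have "(\<Sum>j\<le>m. r0 m H k j - dv m v k j) = (\<Sum>j\<le>m. r0 m H k j) - (\<Sum>j\<le>m. dv m v k j)"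
    by (simp add: sum_subtractf)
  also have "(\<Sum>j\<le>m. dv m v k j) = v k" by (simp add: dv_def)
  finally show ?thesis by (simp add: sum_r0)
qed

theorem lemma1:
  fixes n m :: nat and H :: "nat \<Rightarrow> nat \<Rightarrow> real" and v :: "nat \<Rightarrow> real"
    and X :: "nat \<Rightarrow> nat \<Rightarrow> real"
  assumes "tau n m H > 4 * sqnorm n v"
    and "sdr_optimal m (Lmat n m H (yvec m H v)) X"
  shows "\<forall>i<m. sgnp (X i m) = 1"
proof (rule ccontr)
  assume "\<not> (\<forall>i<m. sgnp (X i m) = 1)"
  then obtain i0 where i0: "i0 < m" "X i0 m \<le> 0" by (auto simp: sgnp_def split: if_splits)
  define L where "L = Lmat n m H (yvec m H v)"
  define w where "w = sqnorm n v"
  have w0: "w \<ge> 0" unfolding w_def sqnorm_def by (simp add: sum_nonneg)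
  have feas: "sdr_feasible m X" and opt: "\<And>Y. sdr_feasible m Y \<Longrightarrow> trprod m L X \<le> trprod m L Y"
    using assms(2) unfolding sdr_optimal_def L_def by auto
  have symX: "\<forall>i\<le>m. \<forall>j\<le>m. X i j = X j i" and diagX: "\<forall>i\<le>m. X i i = 1"
    and psdX: "\<And>x. qf m X x \<ge> 0"
    using feas unfolding sdr_feasible_def qf_def by auto
  have feasI: "sdr_feasible m Y" if "\<forall>i\<le>m. \<forall>j\<le>m. Y i j = Y j i" "\<forall>i\<le>m. Y i i = 1"
      "\<And>x. qf m Y x \<ge> 0" for Y
    using that unfolding sdr_feasible_def qf_def by auto
  define J :: "nat \<Rightarrow> nat \<Rightarrow> real" where "J = (\<lambda>i j. 1)"
  have feasJ: "sdr_feasible m J"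
    by (rule feasI) (auto simp: J_def qf_ones)
  have trLJ: "trprod m L J = w"
  proof -
    have "trprod m L J = (\<Sum>k<n. qf m J (\<lambda>j. r0 m H k j - dv m v k j))"
      unfolding L_def by (rule trprod_as) (auto simp: J_def L_eq)
    also have "\<dots> = w" unfolding J_def qf_ones sum_r1 w_def sqnorm_def by simp
    finally show ?thesis .
  qed
  define P1 where "P1 = trprod m L X"
  have P1w: "P1 \<le> w" using opt[OF feasJ] trLJ unfolding P1_def by simp
  define A where "A = (\<Sum>k<n. qf m X (r0 m H k))"
  have A_tr: "\<And>Y. \<forall>i\<le>m. \<forall>j\<le>m. Y i j = Y j i \<Longrightarrow> trprod m (L0mat n m H) Y = (\<Sum>k<n. qf m Y (r0 m H k))"
    by (rule trprod_as) (auto simp: L0_eq)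
  have P1_eq: "P1 = (\<Sum>k<n. (qf m X (r0 m H k) + qf m X (\<lambda>j. r0 m H k j - 2 * dv m v k j)) / 2 - qf m X (dv m v k))"
  proof -
    have "P1 = (\<Sum>k<n. qf m X (\<lambda>j. r0 m H k j - dv m v k j))"
      unfolding P1_def L_def by (rule trprod_as[OF symX]) (auto simp: L_eq)
    also have "\<dots> = (\<Sum>k<n. (qf m X (r0 m H k) + qf m X (\<lambda>j. r0 m H k j - 2 * dv m v k j)) / 2 - qf m X (dv m v k))"
      by (rule sum.cong[OF refl], rule qf_par)
    finally show ?thesis .
  qed
  have dvq: "qf m X (dv m v k) = (v k)^2" for k
  proof -
    have "dv m v k = (\<lambda>j. if j = m then v k else 0)" by (auto simp: dv_def)
    then show ?thesis using diagX by (simp add: qf_delta power2_eq_square)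
  qed
  have P1_ge: "P1 \<ge> A / 2 - w"
  proof -
    have "P1 = (A + (\<Sum>k<n. qf m X (\<lambda>j. r0 m H k j - 2 * dv m v k j))) / 2 - w"
      unfolding P1_eq A_def w_def sqnorm_def dvq
      by (simp add: sum_subtractf sum.distrib sum_divide_distrib[symmetric])
    moreover have "(\<Sum>k<n. qf m X (\<lambda>j. r0 m H k j - 2 * dv m v k j)) \<ge> 0"
      by (rule sum_nonneg) (simp add: psdX)
    ultimately show ?thesis by simp
  qed
  define T where "T = trMXMt m X"
  have T_eq: "T = (\<Sum>i<m. X i i - 2 * X i m + X m m)" unfolding T_def by (rule trM_eq[OF symX])
  have term_nn: "X i i - 2 * X i m + X m m \<ge> 0" if "i < m" for i
    using psdX[of "\<lambda>j. (if j = i then 1 else 0) - (if j = m then 1 else 0)"] that symX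
    by (simp add: qf_two)
  have "X i0 i0 - 2 * X i0 m + X m m \<le> T"
    unfolding T_eq by (rule member_le_sum) (use i0 term_nn in auto)
  then have T2: "T \<ge> 2" using diagX i0 by auto
  define t where "t = 1 / T"
  have t0: "0 < t" "t \<le> 1" "t * T = 1" using T2 unfolding t_def by auto
  define Xt where "Xt = (\<lambda>i j. t * X i j + (1 - t) * J i j)"
  have symXt: "\<forall>i\<le>m. \<forall>j\<le>m. Xt i j = Xt j i" using symX unfolding Xt_def J_def by auto
  have feasXt: "sdr_feasible m Xt"
  proof (rule feasI[OF symXt])
    show "\<forall>i\<le>m. Xt i i = 1" using diagX unfolding Xt_def J_def by auto
    show "qf m Xt x \<ge> 0" for x
      unfolding Xt_def qf_lin using psdX[of x] t0 by (simp add: J_def qf_ones)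
  qed
  have HXt: "trMXMt m Xt = 1"
  proof -
    have "trMXMt m Xt = (\<Sum>i<m. t * (X i i - 2 * X i m + X m m))"
      by (subst trM_eq[OF symXt]) (simp add: Xt_def J_def algebra_simps)
    also have "\<dots> = t * T" unfolding T_eq by (simp add: sum_distrib_left)
    finally show ?thesis using t0 by simp
  qed
  have L0Xt: "trprod m (L0mat n m H) Xt = t * A"
  proof -
    have "trprod m (L0mat n m H) Xt = (\<Sum>k<n. qf m Xt (r0 m H k))" by (rule A_tr[OF symXt])
    also have "\<dots> = t * A"
      unfolding A_def Xt_def qf_lin by (simp add: J_def qf_ones sum_r0 sum_distrib_left)
    finally show ?thesis .
  qed
  have bdd: "bdd_below {trprod m (L0mat n m H) Y | Y. sdr_feasible m Y \<and> trMXMt m Y = 1}"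
  proof (rule bdd_belowI[of _ 0])
    fix z assume "z \<in> {trprod m (L0mat n m H) Y | Y. sdr_feasible m Y \<and> trMXMt m Y = 1}"
    then obtain Y where Y: "z = trprod m (L0mat n m H) Y" "sdr_feasible m Y" by auto
    have "\<forall>i\<le>m. \<forall>j\<le>m. Y i j = Y j i" "\<And>x. qf m Y x \<ge> 0"
      using Y(2) unfolding sdr_feasible_def qf_def by auto
    then show "0 \<le> z" unfolding Y(1) by (simp add: A_tr sum_nonneg)
  qed
  have "tau n m H \<le> t * A"
    unfolding tau_def L0Xt[symmetric]
    by (rule cInf_lower[OF _ bdd]) (use feasXt HXt in auto)
  then have "tau n m H * T \<le> A" using t0 T2 unfolding t_def by (simp add: field_simps)
  moreover have "tau n m H > 0" using assms(1) w0 unfolding w_def by linarith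
  ultimately have "A \<ge> 2 * tau n m H" using T2
  proof -
    assume a: "tau n m H * T \<le> A" "tau n m H > 0" "2 \<le> T"
    have "tau n m H * 2 \<le> tau n m H * T" using a by (intro mult_left_mono) auto
    then show ?thesis using a by linarith
  qed
  then have "A > 8 * w" using assms(1) unfolding w_def by linarith
  then show False using P1_ge P1w w0 by linarith
qed

end
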